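(* Let $\mathcal{P}_1,\mathcal{P}_2$ be finite posets such that $\mathcal{C}(\mathcal{P}_j)$ has $q_j$ extremal rays for $j=1,2$, and suppose $\mathcal{C}(\mathcal{P}_2)$ is simplicial. Then the maximum ND rank of matrices in $\mathcal{C}(\mathcal{P}_1)\otimes\mathcal{C}(\mathcal{P}_2)$ is $\min(q_1,q_2)$.
   Context: For a finite poset $\mathcal{Q}$, the order cone $\mathcal{C}(\mathcal{Q})\subset\mathbb{R}^{\mathcal{Q}}$ is the set of $\mathbf{f}$ with $f_x\ge0$ for all $x$ and $f_x\le f_y$ whenever $x\preceq y$; an extremal ray is a one-dimensional face, and a cone in $\mathbb{R}^p$ is simplicial if it is the conical hull of $p$ linearly independent vectors. $\mathcal{C}(\mathcal{P}_1)\otimes\mathcal{C}(\mathcal{P}_2)$ is the set of matrices $\sum_{i=1}^r\mathbf{a}_i\mathbf{b}_i^\intercal$ (finite $r$) with $\mathbf{a}_i\in\mathcal{C}(\mathcal{P}_1)$, $\mathbf{b}_i\in\mathcal{C}(\mathcal{P}_2)$; the ND rank of such a matrix is the minimal such $r$, and the maximum ND rank is the largest ND rank attained by such matrices. *)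

theory Defs
  imports "HOL-Analysis.Analysis"
begin

text \<open>A finite poset is modelled as a finite type with a partial order (type class order).
  The space R^Q is real ^ 'q.\<close>

definition order_cone :: "(real ^ ('q::{finite,order})) set" where
  "order_cone = {f. (\<forall>x. 0 \<le> f $ x) \<and> (\<forall>x y. x \<le> y \<longrightarrow> f $ x \<le> f $ y)}"

definition extremal_rays :: "('a::euclidean_space) set \<Rightarrow> 'a set set" where
  "extremal_rays C = {F. F face_of C \<and> aff_dim F = 1}"

definition conical_hull :: "('a::real_vector) set \<Rightarrow> 'a set" where
  "conical_hull S = {x. \<exists>T c. finite T \<and> T \<subseteq> S \<and> (\<forall>v\<in>T. 0 \<le> c v) \<and> x = (\<Sum>v\<in>T. c v *\<^sub>R v)}"

definition simplicial :: "(real ^ ('n::finite)) set \<Rightarrow> bool" where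
  "simplicial C \<longleftrightarrow> (\<exists>S. independent S \<and> card S = CARD('n) \<and> C = conical_hull S)"

definition outer_prod :: "real ^ 'm \<Rightarrow> real ^ 'n \<Rightarrow> real ^ 'n ^ 'm" where
  "outer_prod a b = (\<chi> i j. a $ i * b $ j)"

definition nd_decomp :: "(real ^ 'm) set \<Rightarrow> (real ^ 'n) set \<Rightarrow> real ^ 'n ^ 'm \<Rightarrow> nat \<Rightarrow> bool" where
  "nd_decomp C1 C2 M r \<longleftrightarrow>
     (\<exists>a b. (\<forall>i<r. a i \<in> C1 \<and> b i \<in> C2) \<and> M = (\<Sum>i<r. outer_prod (a i) (b i)))"

definition cone_tensor :: "(real ^ 'm) set \<Rightarrow> (real ^ 'n) set \<Rightarrow> (real ^ 'n ^ 'm) set" where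
  "cone_tensor C1 C2 = {M. \<exists>r. nd_decomp C1 C2 M r}"

definition nd_rank :: "(real ^ 'm) set \<Rightarrow> (real ^ 'n) set \<Rightarrow> real ^ 'n ^ 'm \<Rightarrow> nat" where
  "nd_rank C1 C2 M = (LEAST r. nd_decomp C1 C2 M r)"

end

theory Submission imports Defs begin

definition csum :: "real^'q::finite \<Rightarrow> real" where "csum f = (\<Sum>i\<in>UNIV. f$i)"
definition base :: "(real^'q::{finite,order}) set" where "base = order_cone \<inter> {f. csum f = 1}"
definition ray :: "'a::real_vector \<Rightarrow> 'a set" where "ray g = {t *\<^sub>R g | t. t \<ge> 0}"

lemma oc_mem: "f \<in> order_cone \<longleftrightarrow> (\<forall>x. 0 \<le> f $ x) \<and> (\<forall>x y. x \<le> y \<longrightarrow> f $ x \<le> f $ y)"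
  by (simp add: order_cone_def)

lemma oc_add: "f \<in> order_cone \<Longrightarrow> g \<in> order_cone \<Longrightarrow> f + g \<in> order_cone"
  by (simp add: oc_mem add_mono add_nonneg_nonneg)

lemma oc_scale: "f \<in> order_cone \<Longrightarrow> 0 \<le> c \<Longrightarrow> c *\<^sub>R f \<in> order_cone"
  by (simp add: oc_mem mult_left_mono)

lemma oc_zero: "0 \<in> order_cone"
  by (simp add: oc_mem)

lemma oc_sum: "finite I \<Longrightarrow> (\<And>i. i \<in> I \<Longrightarrow> f i \<in> order_cone) \<Longrightarrow> sum f I \<in> order_cone"
  by (induction I rule: finite_induct) (auto intro: oc_add oc_zero)

lemma oc_convex: "convex (order_cone :: (real^'q::{finite,order}) set)"
  unfolding convex_def by (auto intro!: oc_add oc_scale)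

lemma csum_nonneg: "f \<in> order_cone \<Longrightarrow> 0 \<le> csum f"
  by (simp add: csum_def oc_mem sum_nonneg)

lemma csum_zero: "f \<in> order_cone \<Longrightarrow> csum f = 0 \<Longrightarrow> f = 0"
  unfolding csum_def oc_mem
  by (simp add: sum_nonneg_eq_0_iff vec_eq_iff)

lemma csum_add: "csum (f + g) = csum f + csum g"
  by (simp add: csum_def sum.distrib)

lemma csum_scale: "csum (c *\<^sub>R f) = c * csum f"
  by (simp add: csum_def sum_distrib_left)

lemma oc_polyhedron: "polyhedron (order_cone :: (real^'q::{finite,order}) set)"
proof -
  have eq: "(order_cone :: (real^('q::{finite,order})) set) =
     (\<Inter>i\<in>UNIV. {f. (- axis i 1) \<bullet> f \<le> 0}) \<inter> (\<Inter>p\<in>{p. fst p \<le> snd p}. {f. (axis (fst p) 1 - axis (snd p) 1) \<bullet> f \<le> 0})"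
    by (auto simp: oc_mem inner_diff_left inner_axis')
  show ?thesis unfolding eq
    by (intro polyhedron_Int polyhedron_Inter) (auto intro: polyhedron_halfspace_le polyhedron_halfspace_ge)
qed

lemma base_polyhedron: "polyhedron (base :: (real^'q::{finite,order}) set)"
proof -
  have eq: "{f::real^('q::{finite,order}). csum f = 1} = {f. (\<chi> i. 1) \<bullet> f = 1}"
    by (simp add: csum_def inner_vec_def)
  show ?thesis unfolding base_def eq
    by (intro polyhedron_Int oc_polyhedron polyhedron_hyperplane)
qed

lemma base_bounded: "bounded (base :: (real^'q::{finite,order}) set)"
  unfolding bounded_iff
proof (intro exI ballI)
  fix f :: "real^('q::{finite,order})" assume "f \<in> base"
  then have "f \<in> order_cone" "csum f = 1" by (auto simp: base_def)
  have "norm f \<le> (\<Sum>i\<in>UNIV. \<bar>f$i\<bar>)" by (rule norm_le_l1_cart)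
  also have "\<dots> = csum f" using \<open>f \<in> order_cone\<close> by (simp add: csum_def oc_mem)
  finally show "norm f \<le> 1" using \<open>csum f = 1\<close> by simp
qed

lemma base_convex: "convex (base :: (real^'q::{finite,order}) set)"
  using base_polyhedron polyhedron_imp_convex by blast

lemma base_compact: "compact (base :: (real^'q::{finite,order}) set)"
  using base_polyhedron base_bounded polyhedron_imp_closed compact_eq_bounded_closed by blast

abbreviation E where "E \<equiv> {x. x extreme_point_of base}"

lemma E_finite: "finite (E :: (real^'q::{finite,order}) set)"
  by (rule finite_polyhedron_extreme_points[OF base_polyhedron])

lemma base_hull: "(base :: (real^'q::{finite,order}) set) = convex hull E"
  by (rule Krein_Milman_Minkowski[OF base_compact base_convex])

lemma E_base: "e \<in> E \<Longrightarrow> e \<in> base"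
  by (simp add: extreme_point_of_def)

lemma base_oc: "e \<in> base \<Longrightarrow> e \<in> order_cone" "e \<in> base \<Longrightarrow> csum e = 1" "e \<in> base \<Longrightarrow> e \<noteq> 0"
  by (auto simp: base_def csum_def)


lemma face_scale:
  assumes F: "F face_of (order_cone :: (real^'q::{finite,order}) set)" and x: "x \<in> F" and t: "0 \<le> t"
  shows "t *\<^sub>R x \<in> F"
proof (cases "x = 0")
  case True then show ?thesis using x by simp
next
  case False
  have FC: "F \<subseteq> order_cone" using F face_of_imp_subset by blast
  have xC: "x \<in> order_cone" using FC x by blast
  have "x \<in> open_segment 0 (2 *\<^sub>R x)"
    unfolding in_segment using False by (intro conjI exI[of _ "1/2"]) auto
  then have z: "0 \<in> F" using face_ofD[OF F _ oc_zero oc_scale[OF xC]] x by force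
  show ?thesis
  proof (cases "t \<le> 1")
    case True
    have "(1 - t) *\<^sub>R 0 + t *\<^sub>R x \<in> F"
      using convexD[OF face_of_imp_convex[OF F] z x, of "1-t" t] True t by simp
    then show ?thesis by simp
  next
    case False
    have "x \<in> open_segment 0 (t *\<^sub>R x)"
      unfolding in_segment using False \<open>x \<noteq> 0\<close> by (intro conjI exI[of _ "1/t"]) auto
    then show ?thesis using face_ofD[OF F _ oc_zero oc_scale[OF xC t]] x by blast
  qed
qed

lemma face_absorb:
  assumes F: "F face_of (order_cone :: (real^'q::{finite,order}) set)" and x: "x \<in> F"
    and eq: "x = y + z" and y: "y \<in> order_cone" and z: "z \<in> order_cone"
  shows "y \<in> F"
proof (cases "y = z")
  case True
  then have "y = (1/2) *\<^sub>R x" using eq by (simp add: scaleR_2[symmetric])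
  then show ?thesis using face_scale[OF F x] by simp
next
  case False
  have "x \<in> open_segment (2 *\<^sub>R y) (2 *\<^sub>R z)"
    unfolding in_segment using False eq by (intro conjI exI[of _ "1/2"]) auto
  then have "2 *\<^sub>R y \<in> F" using face_ofD[OF F _ oc_scale[OF y] oc_scale[OF z]] x by force
  from face_scale[OF F this, of "1/2"] show ?thesis by simp
qed

lemma face_absorb_sum:
  assumes F: "F face_of (order_cone :: (real^'q::{finite,order}) set)"
    and I: "finite I" and f: "\<And>i. i \<in> I \<Longrightarrow> f i \<in> order_cone"
    and x: "sum f I \<in> F" and i: "i \<in> I"
  shows "f i \<in> F"
proof -
  have "sum f I = f i + sum f (I - {i})" using I i by (simp add: sum.remove)
  then show ?thesis using face_absorb[OF F x _ f[OF i] oc_sum] I f by auto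
qed

lemma ray_face:
  assumes e: "e extreme_point_of (base :: (real^'q::{finite,order}) set)"
  shows "ray e face_of order_cone"
proof -
  have eb: "e \<in> base" using e by (simp add: extreme_point_of_def)
  have eC: "e \<in> order_cone" and se: "csum e = 1" using base_oc[OF eb] by auto
  have sub: "ray e \<subseteq> order_cone" using eC by (auto simp: ray_def intro: oc_scale)
  have cv: "convex (ray e)"
    unfolding convex_def ray_def
  proof (clarify)
    fix u v s t :: real assume h: "0 \<le> u" "0 \<le> v" "u + v = 1" "0 \<le> s" "0 \<le> t"
    show "\<exists>r. u *\<^sub>R s *\<^sub>R e + v *\<^sub>R t *\<^sub>R e = r *\<^sub>R e \<and> 0 \<le> r"
      using h by (intro exI[of _ "u * s + v * t"]) (auto simp: scaleR_add_left)
  qed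
  have key: "a \<in> ray e \<and> b \<in> ray e"
    if a: "a \<in> order_cone" and b: "b \<in> order_cone" and xr: "x \<in> ray e" and xs: "x \<in> open_segment a b" for a b x
  proof -
    obtain t where t: "0 \<le> t" "x = t *\<^sub>R e" using xr by (auto simp: ray_def)
    obtain u where u: "0 < u" "u < 1" "x = (1 - u) *\<^sub>R a + u *\<^sub>R b" and ab: "a \<noteq> b"
      using xs by (auto simp: in_segment)
    define sa where "sa = csum a"
    define sb where "sb = csum b"
    have sa0: "0 \<le> sa" "0 \<le> sb" using csum_nonneg a b by (auto simp: sa_def sb_def)
    have tsum: "t = (1 - u) * sa + u * sb"
      using arg_cong[OF u(3), of csum] t se by (simp add: csum_add csum_scale sa_def sb_def)
    show ?thesis
    proof (cases "sa = 0")
      case True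
      then have "a = 0" using csum_zero[OF a] True sa_def by simp
      then have "u *\<^sub>R b = t *\<^sub>R e" using u t by simp
      then have "(1/u) *\<^sub>R (u *\<^sub>R b) = (1/u) *\<^sub>R (t *\<^sub>R e)" by simp
      then have "b = (t / u) *\<^sub>R e" using u by simp
      moreover have "a \<in> ray e" using \<open>a = 0\<close> by (auto simp: ray_def intro!: exI[of _ 0])
      ultimately show ?thesis using t u by (auto simp: ray_def)
    next
      case sa: False
      show ?thesis
      proof (cases "sb = 0")
        case True
        then have "b = 0" using csum_zero[OF b] True sb_def by simp
        then have "(1 - u) *\<^sub>R a = t *\<^sub>R e" using u t by simp
        then have "(1/(1-u)) *\<^sub>R ((1 - u) *\<^sub>R a) = (1/(1-u)) *\<^sub>R (t *\<^sub>R e)" by simp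
        then have "a = (t / (1 - u)) *\<^sub>R e" using u by simp
        moreover have "b \<in> ray e" using \<open>b = 0\<close> by (auto simp: ray_def intro!: exI[of _ 0])
        ultimately show ?thesis using t u by (auto simp: ray_def)
      next
        case sb: False
        have sap: "sa > 0" "sb > 0" using sa sb sa0 by auto
        have tp: "t > 0" using tsum sap u by (smt (verit) mult_pos_pos)
        define a' where "a' = (1/sa) *\<^sub>R a"
        define b' where "b' = (1/sb) *\<^sub>R b"
        have a'b: "a' \<in> base" using a sap by (auto simp: a'_def base_def csum_scale sa_def intro: oc_scale)
        have b'b: "b' \<in> base" using b sap by (auto simp: b'_def base_def csum_scale sb_def intro: oc_scale)
        define v where "v = u * sb / t"
        have p1: "(1-u) * sa > 0" "u * sb > 0" using sap u by simp_all
        have v: "0 < v" "v < 1" using p1 tp tsum by (auto simp: v_def divide_less_eq)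
        have "e = (1/t) *\<^sub>R x" using t tp by simp
        also have "\<dots> = ((1-u)/t) *\<^sub>R a + (u/t) *\<^sub>R b"
          using u(3) by (simp add: scaleR_add_right)
        also have "\<dots> = ((1 - v) / sa) *\<^sub>R a + (v / sb) *\<^sub>R b"
        proof -
          have "1 - v = (1-u) * sa / t" using tp tsum by (simp add: v_def field_simps)
          then have c1: "(1 - v) / sa = (1-u)/t" using sap by simp
          have c2: "v / sb = u / t" using tsum tp sap by (simp add: v_def field_simps)
          show ?thesis using c1 c2 by simp
        qed
        also have "\<dots> = (1 - v) *\<^sub>R a' + v *\<^sub>R b'"
          by (simp add: a'_def b'_def)
        finally have ee: "e = (1 - v) *\<^sub>R a' + v *\<^sub>R b'" .
        have "a' = b'"
        proof (rule ccontr)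
          assume "a' \<noteq> b'"
          then have "e \<in> open_segment a' b'" unfolding in_segment using v ee by blast
          then show False using e a'b b'b by (auto simp: extreme_point_of_def)
        qed
        then have "e = a'" using ee by (simp add: algebra_simps)
        have "a = sa *\<^sub>R a'" "b = sb *\<^sub>R b'" using sap by (auto simp: a'_def b'_def)
        then have "a = sa *\<^sub>R e" "b = sb *\<^sub>R e" using \<open>a' = b'\<close> \<open>e = a'\<close> by auto
        then show ?thesis using sap by (auto simp: ray_def)
      qed
    qed
  qed
  show ?thesis unfolding face_of_def using sub cv key by blast
qed

lemma ray_aff_dim:
  assumes "(e::'a::euclidean_space) \<noteq> 0"
  shows "aff_dim (ray e) = 1"
proof -
  have z: "0 \<in> ray e" by (auto simp: ray_def intro!: exI[of _ 0])
  have er: "e \<in> ray e" by (auto simp: ray_def intro!: exI[of _ 1])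
  have "aff_dim (ray e) = int (dim ((+) (- 0) ` ray e))"
    by (rule aff_dim_eq_dim) (simp add: z hull_inc)
  also have "\<dots> = int (dim (ray e))" by simp
  also have "dim (ray e) = dim {e}"
  proof -
    have "span (ray e) = span {e}"
    proof
      show "span (ray e) \<subseteq> span {e}"
        by (rule span_minimal) (auto simp: ray_def span_clauses)
      show "span {e} \<subseteq> span (ray e)" using er by (simp add: span_mono)
    qed
    then show ?thesis by (metis dim_span)
  qed
  finally show ?thesis using assms by simp
qed


lemma ray_unique:
  assumes "e \<in> base" "e' \<in> base" "x \<in> ray e" "x \<in> ray e'" "x \<noteq> 0"
  shows "e = e'"
proof -
  obtain t t' where t: "x = t *\<^sub>R e" "x = t' *\<^sub>R e'"
    using assms(3,4) unfolding ray_def by blast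
  have c1: "csum x = t" using t(1) base_oc(2)[OF assms(1)] by (simp add: csum_scale)
  have c2: "csum x = t'" using t(2) base_oc(2)[OF assms(2)] by (simp add: csum_scale)
  have tt: "t = t'" using c1 c2 by simp
  have "t \<noteq> 0" using t assms(5) by auto
  then show ?thesis using t tt by simp
qed

lemma ray_self: "e \<in> ray e" by (auto simp: ray_def intro!: exI[of _ 1])

lemma ray_scale_eq: "(c::real) > 0 \<Longrightarrow> ray (c *\<^sub>R x) = ray x"
proof -
  assume c: "c > 0"
  show ?thesis
  proof
    show "ray (c *\<^sub>R x) \<subseteq> ray x"
    proof
      fix y assume "y \<in> ray (c *\<^sub>R x)"
      then obtain t where "t \<ge> 0" "y = t *\<^sub>R (c *\<^sub>R x)" by (auto simp: ray_def)
      then have "y = (t * c) *\<^sub>R x" "t * c \<ge> 0" using c by auto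
      then show "y \<in> ray x" unfolding ray_def by blast
    qed
    show "ray x \<subseteq> ray (c *\<^sub>R x)"
    proof
      fix y assume "y \<in> ray x"
      then obtain t where "t \<ge> 0" "y = t *\<^sub>R x" by (auto simp: ray_def)
      then have "y = (t / c) *\<^sub>R (c *\<^sub>R x)" "t / c \<ge> 0" using c by auto
      then show "y \<in> ray (c *\<^sub>R x)" unfolding ray_def by blast
    qed
  qed
qed

lemma extremal_ray_is_ray:
  assumes F: "F \<in> extremal_rays (order_cone :: (real^'q::{finite,order}) set)"
  shows "\<exists>e. e extreme_point_of base \<and> F = ray e"
proof -
  have Ff: "F face_of order_cone" and Fd: "aff_dim F = 1" using F by (auto simp: extremal_rays_def)
  have FC: "F \<subseteq> order_cone" using Ff face_of_imp_subset by blast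
  have "F \<noteq> {}" using Fd by auto
  moreover have "F \<noteq> {0}" using Fd by auto
  ultimately obtain x where x: "x \<in> F" "x \<noteq> 0" by blast
  have z: "0 \<in> F" using face_scale[OF Ff x(1), of 0] by simp
  have "aff_dim F = int (dim ((+) (- 0) ` F))"
    by (rule aff_dim_eq_dim) (simp add: z hull_inc)
  then have dF: "dim F = 1" using Fd by simp
  have "span {x} = span F"
    by (rule dim_eq_span) (use x dF in \<open>auto simp: span_base\<close>)
  then have Fsp: "F \<subseteq> span {x}" by (simp add: span_superset)
  have xC: "x \<in> order_cone" using FC x by blast
  have "F = ray x"
  proof
    show "ray x \<subseteq> F" using face_scale[OF Ff x(1)] by (auto simp: ray_def)
    show "F \<subseteq> ray x"
    proof
      fix y assume y: "y \<in> F"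
      then obtain k where k: "y = k *\<^sub>R x" using Fsp by (auto simp: span_singleton)
      have yC: "y \<in> order_cone" using FC y by blast
      have "k \<ge> 0"
      proof (rule ccontr)
        assume "\<not> k \<ge> 0"
        then have kn: "k < 0" by simp
        have "x $ i = 0" for i
        proof -
          have "0 \<le> k * x $ i" using yC k by (simp add: oc_mem)
          moreover have "0 \<le> x $ i" using xC by (simp add: oc_mem)
          ultimately show ?thesis using kn by (smt (verit) mult_neg_pos)
        qed
        then have "x = 0" by (simp add: vec_eq_iff)
        then show False using x by simp
      qed
      then show "y \<in> ray x" using k by (auto simp: ray_def)
    qed
  qed
  have sx: "csum x > 0" using csum_nonneg[OF xC] csum_zero[OF xC] x(2) by force
  define e where "e = (1 / csum x) *\<^sub>R x"
  have Fe: "F = ray e" using \<open>F = ray x\<close> sx by (simp add: e_def ray_scale_eq)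
  have eb: "e \<in> base" using sx xC by (auto simp: e_def base_def csum_scale intro: oc_scale)
  have "e extreme_point_of base"
    unfolding extreme_point_of_def
  proof (intro conjI eb ballI notI)
    fix a b assume a: "a \<in> base" and b: "b \<in> base" and s: "e \<in> open_segment a b"
    have "a \<in> F \<and> b \<in> F" using face_ofD[OF Ff s] a b Fe ray_self by (auto simp: base_def)
    then have "a = e" "b = e" using ray_unique[OF a eb] ray_unique[OF b eb] base_oc(3)[OF a] base_oc(3)[OF b] ray_self Fe
      by auto
    then show False using s by simp
  qed
  then show ?thesis using Fe by blast
qed

lemma rays_bij: "bij_betw ray (E :: (real^'q::{finite,order}) set) (extremal_rays order_cone)"
proof (rule bij_betw_imageI)
  show "inj_on ray (E :: (real^'q::{finite,order}) set)"
  proof (rule inj_onI)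
    fix e e' :: "real^('q::{finite,order})" assume e: "e \<in> E" and e': "e' \<in> E" and eq: "ray e = ray e'"
    show "e = e'" using ray_unique[OF E_base[OF e] E_base[OF e'] ray_self] eq ray_self
        base_oc(3)[OF E_base[OF e]] by auto
  qed
  show "ray ` (E :: (real^'q::{finite,order}) set) = extremal_rays order_cone"
  proof
    show "ray ` E \<subseteq> extremal_rays order_cone"
      using ray_face ray_aff_dim base_oc(3)[OF E_base] by (auto simp: extremal_rays_def)
    show "extremal_rays order_cone \<subseteq> ray ` (E :: (real^'q::{finite,order}) set)"
      using extremal_ray_is_ray by blast
  qed
qed

lemma card_rays: "card (extremal_rays (order_cone :: (real^'q::{finite,order}) set)) = card (E :: (real^('q::{finite,order})) set)"
  by (metis bij_betw_same_card rays_bij)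

lemma oc_gen:
  assumes f: "f \<in> (order_cone :: (real^'q::{finite,order}) set)"
  shows "\<exists>c. (\<forall>e\<in>E. 0 \<le> c e) \<and> f = (\<Sum>e\<in>(E :: (real^('q::{finite,order})) set). c e *\<^sub>R e)"
proof (cases "f = 0")
  case True then show ?thesis by (intro exI[of _ "\<lambda>_. 0"]) simp
next
  case False
  have sx: "csum f > 0" using csum_nonneg[OF f] csum_zero[OF f] False by force
  have "(1 / csum f) *\<^sub>R f \<in> base" using sx f by (auto simp: base_def csum_scale intro: oc_scale)
  then have "(1 / csum f) *\<^sub>R f \<in> convex hull (E :: (real^('q::{finite,order})) set)" using base_hull by blast
  then obtain u where u: "\<forall>x\<in>E. 0 \<le> u x" "(\<Sum>x\<in>(E :: (real^('q::{finite,order})) set). u x *\<^sub>R x) = (1 / csum f) *\<^sub>R f"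
    unfolding convex_hull_finite[OF E_finite] by blast
  have "f = csum f *\<^sub>R ((1 / csum f) *\<^sub>R f)" using sx by simp
  also have "\<dots> = (\<Sum>x\<in>E. (csum f * u x) *\<^sub>R x)" unfolding u(2)[symmetric] by (simp add: scaleR_sum_right)
  finally show ?thesis using u(1) sx by (intro exI[of _ "\<lambda>x. csum f * u x"]) auto
qed


lemma outer_sum_comp:
  "(\<Sum>i\<in>I. outer_prod (a i) (b i)) $ j $ l = (\<Sum>i\<in>I. a i $ j * b i $ l)"
  by (simp add: outer_prod_def)

lemma outer_zero: "outer_prod 0 v = 0"
  by (simp add: outer_prod_def vec_eq_iff)

lemma conical_hull_S:
  assumes "finite S" "x \<in> conical_hull S"
  shows "\<exists>d. (\<forall>v\<in>S. 0 \<le> d v) \<and> x = (\<Sum>v\<in>S. d v *\<^sub>R v)"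
proof -
  obtain T c where T: "finite T" "T \<subseteq> S" "\<forall>v\<in>T. 0 \<le> c v" "x = (\<Sum>v\<in>T. c v *\<^sub>R v)"
    using assms(2) by (auto simp: conical_hull_def)
  define d where "d v = (if v \<in> T then c v else 0)" for v
  have "(\<Sum>v\<in>S. d v *\<^sub>R v) = (\<Sum>v\<in>T. d v *\<^sub>R v)"
    by (rule sum.mono_neutral_right) (use assms(1) T in \<open>auto simp: d_def\<close>)
  also have "\<dots> = x" using T by (simp add: d_def)
  finally show ?thesis using T by (intro exI[of _ d]) (auto simp: d_def)
qed

lemma S_in_hull: "v \<in> S \<Longrightarrow> v \<in> conical_hull S"
  unfolding conical_hull_def
  by (rule CollectI, rule exI[of _ "{v}"], rule exI[of _ "\<lambda>_. 1"]) auto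

lemma indep_unique:
  fixes S :: "(real^'n) set" and X Y :: "real^'n \<Rightarrow> real^'m"
  assumes ind: "independent S"
    and eq: "(\<Sum>v\<in>S. outer_prod (X v) v) = (\<Sum>v\<in>S. outer_prod (Y v) v)"
    and v: "v \<in> S"
  shows "X v = Y v"
proof -
  have fin: "finite S" using ind independent_explicit by blast
  have "X v $ j = Y v $ j" for j
  proof -
    have rows: "(\<Sum>w\<in>S. outer_prod (Z w) w) $ j = (\<Sum>w\<in>S. Z w $ j *\<^sub>R w)" for Z :: "real^'n \<Rightarrow> real^'m"
      by (simp add: vec_eq_iff outer_prod_def)
    have "(\<Sum>w\<in>S. X w $ j *\<^sub>R w) = (\<Sum>w\<in>S. Y w $ j *\<^sub>R w)"
      using arg_cong[OF eq, of "\<lambda>M. M $ j"] rows by simp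
    then have "(\<Sum>w\<in>S. (X w $ j - Y w $ j) *\<^sub>R w) = 0"
      by (simp add: scaleR_diff_left sum_subtractf)
    then show ?thesis using ind v unfolding independent_explicit by auto
  qed
  then show ?thesis by (simp add: vec_eq_iff)
qed


lemma upper1:
  assumes "nd_decomp (order_cone::(real^('a::{finite,order})) set) (order_cone::(real^('b::{finite,order})) set) M r"
  shows "nd_decomp (order_cone::(real^('a::{finite,order})) set) (order_cone::(real^('b::{finite,order})) set) M (card (E::(real^('a::{finite,order})) set))"
proof -
  obtain a b where ab: "\<forall>i<r. a i \<in> (order_cone::(real^('a::{finite,order})) set) \<and> b i \<in> (order_cone::(real^('b::{finite,order})) set)"
    "M = (\<Sum>i<r. outer_prod (a i) (b i))"
    using assms by (auto simp: nd_decomp_def)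
  have "\<forall>i. \<exists>c. i < r \<longrightarrow> (\<forall>e\<in>(E::(real^('a::{finite,order})) set). 0 \<le> c e) \<and> a i = (\<Sum>e\<in>E. c e *\<^sub>R e)"
    using oc_gen ab(1) by blast
  then obtain c where c: "\<And>i. i < r \<Longrightarrow> (\<forall>e\<in>(E::(real^('a::{finite,order})) set). 0 \<le> c i e) \<and> a i = (\<Sum>e\<in>E. c i e *\<^sub>R e)"
    by metis
  define n where "n = card (E::(real^('a::{finite,order})) set)"
  obtain g where g: "bij_betw g {..<n} (E::(real^('a::{finite,order})) set)"
    using ex_bij_betw_nat_finite[OF E_finite] by (auto simp: n_def atLeast0LessThan)
  define B where "B k = (\<Sum>i<r. c i (g k) *\<^sub>R b i)" for k
  have gE: "g k \<in> E" if "k < n" for k using g that by (auto simp: bij_betw_def)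
  have AC: "g k \<in> order_cone" if "k < n" for k using gE[OF that] E_base base_oc(1) by blast
  have BC: "B k \<in> order_cone" if "k < n" for k
    unfolding B_def using c ab(1) gE[OF that] by (intro oc_sum oc_scale) auto
  have comp: "M $ j $ l = (\<Sum>k<n. outer_prod (g k) (B k)) $ j $ l" for j l
  proof -
    have "(\<Sum>k<n. outer_prod (g k) (B k)) $ j $ l = (\<Sum>k<n. g k $ j * B k $ l)"
      by (rule outer_sum_comp)
    also have "\<dots> = (\<Sum>e\<in>E. e $ j * (\<Sum>i<r. c i e * b i $ l))"
      using sum.reindex_bij_betw[OF g, of "\<lambda>e. e $ j * (\<Sum>i<r. c i e * b i $ l)"]
      by (simp add: B_def)
    also have "\<dots> = (\<Sum>i<r. (\<Sum>e\<in>E. c i e * e $ j) * b i $ l)"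
      by (simp add: sum_distrib_left sum_distrib_right mult_ac sum.swap[of _ E])
    also have "\<dots> = (\<Sum>i<r. a i $ j * b i $ l)"
      by (rule sum.cong) (use c in auto)
    also have "\<dots> = M $ j $ l" using ab(2) by (simp add: outer_prod_def)
    finally show ?thesis by simp
  qed
  then have "M = (\<Sum>k<n. outer_prod (g k) (B k))" by (simp add: vec_eq_iff)
  then show ?thesis unfolding nd_decomp_def n_def[symmetric] using AC BC by blast
qed

lemma upper2:
  assumes "nd_decomp (order_cone::(real^('a::{finite,order})) set) (order_cone::(real^('b::{finite,order})) set) M r"
  shows "nd_decomp (order_cone::(real^('a::{finite,order})) set) (order_cone::(real^('b::{finite,order})) set) M (card (E::(real^('b::{finite,order})) set))"
proof -
  obtain a b where ab: "\<forall>i<r. a i \<in> (order_cone::(real^('a::{finite,order})) set) \<and> b i \<in> (order_cone::(real^('b::{finite,order})) set)"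
    "M = (\<Sum>i<r. outer_prod (a i) (b i))"
    using assms by (auto simp: nd_decomp_def)
  have "\<forall>i. \<exists>c. i < r \<longrightarrow> (\<forall>e\<in>(E::(real^('b::{finite,order})) set). 0 \<le> c e) \<and> b i = (\<Sum>e\<in>E. c e *\<^sub>R e)"
    using oc_gen ab(1) by blast
  then obtain c where c: "\<And>i. i < r \<Longrightarrow> (\<forall>e\<in>(E::(real^('b::{finite,order})) set). 0 \<le> c i e) \<and> b i = (\<Sum>e\<in>E. c i e *\<^sub>R e)"
    by metis
  define n where "n = card (E::(real^('b::{finite,order})) set)"
  obtain g where g: "bij_betw g {..<n} (E::(real^('b::{finite,order})) set)"
    using ex_bij_betw_nat_finite[OF E_finite] by (auto simp: n_def atLeast0LessThan)
  define A where "A k = (\<Sum>i<r. c i (g k) *\<^sub>R a i)" for k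
  have gE: "g k \<in> E" if "k < n" for k using g that by (auto simp: bij_betw_def)
  have BC: "g k \<in> order_cone" if "k < n" for k using gE[OF that] E_base base_oc(1) by blast
  have AC: "A k \<in> order_cone" if "k < n" for k
    unfolding A_def using c ab(1) gE[OF that] by (intro oc_sum oc_scale) auto
  have comp: "M $ j $ l = (\<Sum>k<n. outer_prod (A k) (g k)) $ j $ l" for j l
  proof -
    have "(\<Sum>k<n. outer_prod (A k) (g k)) $ j $ l = (\<Sum>k<n. A k $ j * g k $ l)"
      by (rule outer_sum_comp)
    also have "\<dots> = (\<Sum>e\<in>E. (\<Sum>i<r. c i e * a i $ j) * e $ l)"
      using sum.reindex_bij_betw[OF g, of "\<lambda>e. (\<Sum>i<r. c i e * a i $ j) * e $ l"]
      by (simp add: A_def)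
    also have "\<dots> = (\<Sum>i<r. a i $ j * (\<Sum>e\<in>E. c i e * e $ l))"
      by (simp add: sum_distrib_left sum_distrib_right mult_ac sum.swap[of _ E])
    also have "\<dots> = (\<Sum>i<r. a i $ j * b i $ l)"
      by (rule sum.cong) (use c in auto)
    also have "\<dots> = M $ j $ l" using ab(2) by (simp add: outer_prod_def)
    finally show ?thesis by simp
  qed
  then have "M = (\<Sum>k<n. outer_prod (A k) (g k))" by (simp add: vec_eq_iff)
  then show ?thesis unfolding nd_decomp_def n_def[symmetric] using AC BC by blast
qed


lemma card_E_le_S:
  assumes ind: "independent S" and hull: "(order_cone::(real^('b::{finite,order})) set) = conical_hull S"
  shows "card (E::(real^('b::{finite,order})) set) \<le> card S"
proof -
  have fin: "finite S" using ind independent_explicit by blast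
  have SC: "S \<subseteq> order_cone" using hull S_in_hull by blast
  have "\<forall>e. \<exists>v. e \<in> (E::(real^('b::{finite,order})) set) \<longrightarrow> v \<in> S \<and> v \<noteq> 0 \<and> v \<in> ray e"
  proof (intro allI impI)
    fix e :: "real^('b::{finite,order})" 
    show "\<exists>v. e \<in> E \<longrightarrow> v \<in> S \<and> v \<noteq> 0 \<and> v \<in> ray e"
    proof (cases "e \<in> E")
      case False then show ?thesis by blast
    next
      case True
      have eb: "e \<in> base" using True E_base by blast
      have Fe: "ray e face_of order_cone" using ray_face True by blast
      have "e \<in> conical_hull S" using hull base_oc(1)[OF eb] by blast
      then obtain d where d: "\<forall>v\<in>S. 0 \<le> d v" "e = (\<Sum>v\<in>S. d v *\<^sub>R v)"
        using conical_hull_S[OF fin] by blast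
      have "\<exists>v\<in>S. d v *\<^sub>R v \<noteq> 0"
      proof (rule ccontr)
        assume "\<not> ?thesis"
        then have "e = 0" using d(2) by (metis (no_types, lifting) scaleR_eq_0_iff sum.neutral)
        then show False using base_oc(3)[OF eb] by simp
      qed
      then obtain v where v: "v \<in> S" "d v *\<^sub>R v \<noteq> 0" by blast
      have "d v *\<^sub>R v \<in> ray e"
      proof (rule face_absorb_sum[OF Fe fin, of "\<lambda>v. d v *\<^sub>R v"])
        show "d i *\<^sub>R i \<in> order_cone" if "i \<in> S" for i using that d SC oc_scale by blast
        show "(\<Sum>v\<in>S. d v *\<^sub>R v) \<in> ray e" using d(2) ray_self by metis
        show "v \<in> S" by (rule v)
      qed
      then have "(1 / d v) *\<^sub>R (d v *\<^sub>R v) \<in> ray e" using face_scale[OF Fe, of "d v *\<^sub>R v" "1 / d v"] d v by simp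
      then have "v \<in> ray e" using v by simp
      then show ?thesis using v by auto
    qed
  qed
  then obtain \<phi> where phi: "\<And>e. e \<in> (E::(real^('b::{finite,order})) set) \<Longrightarrow> \<phi> e \<in> S \<and> \<phi> e \<noteq> 0 \<and> \<phi> e \<in> ray e"
    by metis
  have "inj_on \<phi> (E::(real^('b::{finite,order})) set)"
  proof (rule inj_onI)
    fix e e' :: "real^('b::{finite,order})" assume "e \<in> E" "e' \<in> E" "\<phi> e = \<phi> e'"
    then show "e = e'" using ray_unique[OF E_base E_base] phi by metis
  qed
  then show ?thesis using card_inj_on_le[of \<phi> E S] phi fin by blast
qed


lemma lower:
  fixes u :: "nat \<Rightarrow> real^('a::{finite,order})" and w :: "nat \<Rightarrow> real^('b::{finite,order})"
  assumes ind: "independent S" and hull: "(order_cone::(real^('b::{finite,order})) set) = conical_hull S"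
    and u: "inj_on u {..<q}" "u ` {..<q} \<subseteq> (E::(real^('a::{finite,order})) set)"
    and w: "inj_on w {..<q}" "w ` {..<q} \<subseteq> S"
    and dec: "nd_decomp (order_cone::(real^('a::{finite,order})) set) (order_cone::(real^('b::{finite,order})) set) (\<Sum>k<q. outer_prod (u k) (w k)) r"
  shows "q \<le> r"
proof -
  have fin: "finite S" using ind independent_explicit by blast
  obtain a b where ab: "\<forall>i<r. a i \<in> (order_cone::(real^('a::{finite,order})) set) \<and> b i \<in> (order_cone::(real^('b::{finite,order})) set)"
    "(\<Sum>k<q. outer_prod (u k) (w k)) = (\<Sum>i<r. outer_prod (a i) (b i))"
    using dec by (auto simp: nd_decomp_def)
  have "\<forall>i. \<exists>d. i < r \<longrightarrow> (\<forall>v\<in>S. 0 \<le> d v) \<and> b i = (\<Sum>v\<in>S. d v *\<^sub>R v)"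
    using conical_hull_S[OF fin] ab(1) hull by blast
  then obtain d where d: "\<And>i. i < r \<Longrightarrow> (\<forall>v\<in>S. 0 \<le> d i v) \<and> b i = (\<Sum>v\<in>S. d i v *\<^sub>R v)"
    by metis
  define U where "U v = (if v \<in> w ` {..<q} then u (the_inv_into {..<q} w v) else 0)" for v
  have M1: "(\<Sum>k<q. outer_prod (u k) (w k)) = (\<Sum>v\<in>S. outer_prod (U v) v)"
  proof -
    have "(\<Sum>v\<in>S. outer_prod (U v) v) = (\<Sum>v\<in>w ` {..<q}. outer_prod (U v) v)"
      by (rule sum.mono_neutral_right) (use fin w in \<open>auto simp: U_def outer_zero\<close>)
    also have "\<dots> = (\<Sum>k<q. outer_prod (U (w k)) (w k))"
      by (rule sum.reindex[OF w(1), unfolded comp_def])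
    also have "\<dots> = (\<Sum>k<q. outer_prod (u k) (w k))"
      by (rule sum.cong) (auto simp: U_def the_inv_into_f_f[OF w(1)])
    finally show ?thesis by simp
  qed
  define A where "A v = (\<Sum>i<r. d i v *\<^sub>R a i)" for v
  have M2: "(\<Sum>i<r. outer_prod (a i) (b i)) = (\<Sum>v\<in>S. outer_prod (A v) v)"
  proof -
    have "(\<Sum>i<r. outer_prod (a i) (b i)) $ j $ l = (\<Sum>v\<in>S. outer_prod (A v) v) $ j $ l" for j l
    proof -
      have "(\<Sum>i<r. outer_prod (a i) (b i)) $ j $ l = (\<Sum>i<r. a i $ j * b i $ l)"
        by (rule outer_sum_comp)
      also have "\<dots> = (\<Sum>i<r. a i $ j * (\<Sum>v\<in>S. d i v * v $ l))"
        by (rule sum.cong) (use d in auto)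
      also have "\<dots> = (\<Sum>v\<in>S. (\<Sum>i<r. d i v * a i $ j) * v $ l)"
        by (simp add: sum_distrib_left sum_distrib_right mult_ac sum.swap[of _ S])
      also have "\<dots> = (\<Sum>v\<in>S. outer_prod (A v) v) $ j $ l"
        by (simp add: outer_prod_def A_def)
      finally show ?thesis .
    qed
    then show ?thesis by (simp add: vec_eq_iff)
  qed
  have UA: "U v = A v" if "v \<in> S" for v
    using indep_unique[OF ind _ that, of U A] M1 M2 ab(2) by simp
  have "\<forall>k<q. \<exists>i. i < r \<and> a i \<noteq> 0 \<and> a i \<in> ray (u k)"
  proof (intro allI impI)
    fix k assume k: "k < q"
    have ukE: "u k \<in> E" using u k by blast
    have Fe: "ray (u k) face_of order_cone" using ray_face ukE by blast
    have wS: "w k \<in> S" using w k by blast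
    have "U (w k) = u k" using k by (auto simp: U_def the_inv_into_f_f[OF w(1)])
    then have uk: "u k = (\<Sum>i<r. d i (w k) *\<^sub>R a i)" using UA[OF wS] by (simp add: A_def)
    have "\<exists>i<r. d i (w k) *\<^sub>R a i \<noteq> 0"
    proof (rule ccontr)
      assume "\<not> ?thesis"
      then have "u k = 0" using uk by (metis (no_types, lifting) lessThan_iff scaleR_eq_0_iff sum.neutral)
      then show False using base_oc(3)[OF E_base[OF ukE]] by simp
    qed
    then obtain i where i: "i < r" "d i (w k) *\<^sub>R a i \<noteq> 0" by blast
    have "d i (w k) *\<^sub>R a i \<in> ray (u k)"
    proof (rule face_absorb_sum[OF Fe, of "{..<r}" "\<lambda>i. d i (w k) *\<^sub>R a i"])
      show "finite {..<r}" by simp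
      show "d j (w k) *\<^sub>R a j \<in> order_cone" if "j \<in> {..<r}" for j
      proof -
        have "j < r" using that by simp
        then have "a j \<in> order_cone" "0 \<le> d j (w k)" using d wS ab(1) by auto
        then show ?thesis by (rule oc_scale)
      qed
      show "(\<Sum>i<r. d i (w k) *\<^sub>R a i) \<in> ray (u k)" using uk ray_self by metis
      show "i \<in> {..<r}" using i by simp
    qed
    then have "(1 / d i (w k)) *\<^sub>R (d i (w k) *\<^sub>R a i) \<in> ray (u k)"
      using face_scale[OF Fe, of "d i (w k) *\<^sub>R a i" "1 / d i (w k)"] d i wS by simp
    then have "a i \<in> ray (u k)" using i by simp
    then show "\<exists>i. i < r \<and> a i \<noteq> 0 \<and> a i \<in> ray (u k)" using i by auto
  qed
  then obtain I where I: "\<And>k. k < q \<Longrightarrow> I k < r \<and> a (I k) \<noteq> 0 \<and> a (I k) \<in> ray (u k)"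
    by metis
  have "inj_on I {..<q}"
  proof (rule inj_onI)
    fix k k' assume kk: "k \<in> {..<q}" "k' \<in> {..<q}" "I k = I k'"
    have "u k \<in> E" "u k' \<in> E" using u kk by auto
    then have "u k = u k'" using ray_unique[OF E_base E_base] I kk by (metis lessThan_iff)
    then show "k = k'" using u(1) kk by (simp add: inj_on_def)
  qed
  then have "card {..<q} \<le> card {..<r}" using card_inj_on_le[of I "{..<q}" "{..<r}"] I by auto
  then show ?thesis by simp
qed


theorem theorem6:
  fixes q1 q2 :: nat
  assumes "card (extremal_rays (order_cone :: (real ^ ('p1::{finite,order})) set)) = q1"
    and "card (extremal_rays (order_cone :: (real ^ ('p2::{finite,order})) set)) = q2"
    and "simplicial (order_cone :: (real ^ ('p2::{finite,order})) set)"
  shows "(\<forall>M \<in> cone_tensor (order_cone :: (real ^ ('p1::{finite,order})) set) (order_cone :: (real ^ ('p2::{finite,order})) set).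
            nd_rank order_cone order_cone M \<le> min q1 q2)
       \<and> (\<exists>M \<in> cone_tensor (order_cone :: (real ^ ('p1::{finite,order})) set) (order_cone :: (real ^ ('p2::{finite,order})) set).
            nd_rank order_cone order_cone M = min q1 q2)"
proof
  have q1: "q1 = card (E :: (real ^ ('p1::{finite,order})) set)" using assms(1) card_rays by metis
  have q2: "q2 = card (E :: (real ^ ('p2::{finite,order})) set)" using assms(2) card_rays by metis
  obtain S where S: "independent S" "(order_cone :: (real ^ ('p2::{finite,order})) set) = conical_hull S"
    using assms(3) by (auto simp: simplicial_def)
  have finS: "finite S" using S(1) independent_explicit by blast
  show "\<forall>M \<in> cone_tensor (order_cone :: (real ^ ('p1::{finite,order})) set) (order_cone :: (real ^ ('p2::{finite,order})) set).
            nd_rank order_cone order_cone M \<le> min q1 q2"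
  proof
    fix M assume "M \<in> cone_tensor (order_cone :: (real ^ ('p1::{finite,order})) set) (order_cone :: (real ^ ('p2::{finite,order})) set)"
    then obtain r where r: "nd_decomp (order_cone :: (real ^ ('p1::{finite,order})) set) (order_cone :: (real ^ ('p2::{finite,order})) set) M r"
      by (auto simp: cone_tensor_def)
    have "nd_rank (order_cone :: (real ^ ('p1::{finite,order})) set) (order_cone :: (real ^ ('p2::{finite,order})) set) M \<le> q1"
      unfolding nd_rank_def q1 by (rule Least_le, rule upper1[OF r])
    moreover have "nd_rank (order_cone :: (real ^ ('p1::{finite,order})) set) (order_cone :: (real ^ ('p2::{finite,order})) set) M \<le> q2"
      unfolding nd_rank_def q2 by (rule Least_le, rule upper2[OF r])
    ultimately show "nd_rank (order_cone :: (real ^ ('p1::{finite,order})) set) (order_cone :: (real ^ ('p2::{finite,order})) set) M \<le> min q1 q2"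
      by simp
  qed
  define q where "q = min q1 q2"
  have qS: "q \<le> card S" using card_E_le_S[OF S] q2 by (simp add: q_def)
  have qE: "q \<le> card (E :: (real ^ ('p1::{finite,order})) set)" using q1 by (simp add: q_def)
  obtain g1 where g1: "bij_betw g1 {..<card (E :: (real ^ ('p1::{finite,order})) set)} (E :: (real ^ ('p1::{finite,order})) set)"
    using ex_bij_betw_nat_finite[OF E_finite] by (auto simp: atLeast0LessThan)
  obtain g2 where g2: "bij_betw g2 {..<card S} S"
    using ex_bij_betw_nat_finite[OF finS] by (auto simp: atLeast0LessThan)
  have sub1: "{..<q} \<subseteq> {..<card (E :: (real ^ ('p1::{finite,order})) set)}" using qE by auto
  have sub2: "{..<q} \<subseteq> {..<card S}" using qS by auto
  have u: "inj_on g1 {..<q}" "g1 ` {..<q} \<subseteq> (E :: (real ^ ('p1::{finite,order})) set)"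
    using g1 sub1 by (auto simp: bij_betw_def intro: inj_on_subset)
  have w: "inj_on g2 {..<q}" "g2 ` {..<q} \<subseteq> S"
    using g2 sub2 by (auto simp: bij_betw_def intro: inj_on_subset)
  define M0 where "M0 = (\<Sum>k<q. outer_prod (g1 k) (g2 k))"
  have dq: "nd_decomp (order_cone :: (real ^ ('p1::{finite,order})) set) (order_cone :: (real ^ ('p2::{finite,order})) set) M0 q"
    unfolding nd_decomp_def M0_def
  proof (intro exI conjI allI impI)
    fix i assume i: "i < q"
    show "g1 i \<in> order_cone" using u(2) i E_base base_oc(1) by blast
    show "g2 i \<in> order_cone" using w(2) i S(2) S_in_hull by blast
  qed simp
  have "nd_rank (order_cone :: (real ^ ('p1::{finite,order})) set) (order_cone :: (real ^ ('p2::{finite,order})) set) M0 = q"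
    unfolding nd_rank_def
  proof (rule Least_equality)
    show "nd_decomp order_cone order_cone M0 q" by (rule dq)
    fix y assume "nd_decomp (order_cone :: (real ^ ('p1::{finite,order})) set) (order_cone :: (real ^ ('p2::{finite,order})) set) M0 y"
    then show "q \<le> y" using lower[OF S u w] unfolding M0_def by blast
  qed
  moreover have "M0 \<in> cone_tensor (order_cone :: (real ^ ('p1::{finite,order})) set) (order_cone :: (real ^ ('p2::{finite,order})) set)"
    using dq by (auto simp: cone_tensor_def)
  ultimately show "\<exists>M \<in> cone_tensor (order_cone :: (real ^ ('p1::{finite,order})) set) (order_cone :: (real ^ ('p2::{finite,order})) set).
            nd_rank order_cone order_cone M = min q1 q2"
    unfolding q_def by blast
qed

end
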